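(* Let $n\ge2$ be an integer and let $A_1,\dots,A_{2n}$ be (not necessarily distinct) points in $\mathbb{R}^m$; set $A_{2n+1}=A_1$. Let $G_1$ be the centroid of $A_1,A_3,\dots,A_{2n-1}$ and $G_2$ the centroid of $A_2,A_4,\dots,A_{2n}$. Then $$\sum_{i=1}^{2n}|A_iA_{i+1}|^2=\sum_{\substack{1\le i<j\le 2n\\ 1<j-i<2n-1}}(-1)^{j-i}|A_iA_j|^2$$ holds if and only if $G_1=G_2$.
   Context: $|XY|$ denotes the Euclidean distance in $\mathbb{R}^m$; the centroid of points $B_1,\dots,B_r$ is the point with position vector $\frac1r\sum_k B_k$. *)

theory Defs
  imports "HOL-Analysis.Analysis"
begin

end

theory Submission
  imports Defs
begin

lemma pair_sum: "(\<Sum>i = 1..2*n. g i) = (\<Sum>k = 1..n. g (2*k - 1) + g (2*k))" for g :: "nat \<Rightarrow> 'a::comm_monoid_add"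
proof (induction n)
  case 0 then show ?case by simp
next
  case (Suc n)
  have "{1..2*Suc n} = insert (2*n+2) (insert (2*n+1) {1..2*n})" by auto
  then have "(\<Sum>i = 1..2*Suc n. g i) = g (2*n+2) + (g (2*n+1) + (\<Sum>i = 1..2*n. g i))"
    by simp
  then show ?case using Suc by (simp add: add_ac)
qed

lemma sym_sum:
  fixes f :: "nat \<Rightarrow> nat \<Rightarrow> real"
  assumes sym: "\<And>i j. f i j = f j i" and diag: "\<And>i. f i i = 0"
  shows "(\<Sum>i\<in>{1..N}. \<Sum>j\<in>{1..N}. f i j) = 2 * (\<Sum>(i, j) \<in> {(i, j). 1 \<le> i \<and> i < j \<and> j \<le> N}. f i j)"
proof -
  let ?P = "{(i, j). 1 \<le> i \<and> i < j \<and> j \<le> N}"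
  let ?R = "{(i, j). 1 \<le> j \<and> j < i \<and> i \<le> N}"
  let ?D = "{(i, j). 1 \<le> i \<and> i = j \<and> j \<le> N}"
  have fin: "finite ({1..N} \<times> {1..N})" by simp
  have eq: "{1..N} \<times> {1..N} = ?P \<union> ?R \<union> ?D" by auto
  have fP: "finite ?P" by (rule finite_subset[OF _ fin]) auto
  have fR: "finite ?R" by (rule finite_subset[OF _ fin]) auto
  have fD: "finite ?D" by (rule finite_subset[OF _ fin]) auto
  have "(\<Sum>i\<in>{1..N}. \<Sum>j\<in>{1..N}. f i j) = (\<Sum>(i,j)\<in>{1..N} \<times> {1..N}. f i j)"
    by (simp add: sum.cartesian_product)
  also have "\<dots> = (\<Sum>(i,j)\<in>?P \<union> ?R. f i j) + (\<Sum>(i,j)\<in>?D. f i j)"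
    unfolding eq by (rule sum.union_disjoint) (use fP fR fD in auto)
  also have "(\<Sum>(i,j)\<in>?D. f i j) = 0"
    by (rule sum.neutral) (auto simp: diag)
  also have "(\<Sum>(i,j)\<in>?P \<union> ?R. f i j) = (\<Sum>(i,j)\<in>?P. f i j) + (\<Sum>(i,j)\<in>?R. f i j)"
    by (rule sum.union_disjoint) (use fP fR in auto)
  also have "(\<Sum>(i,j)\<in>?R. f i j) = (\<Sum>(i,j)\<in>?P. f i j)"
  proof -
    have "?R = (\<lambda>(i,j). (j,i)) ` ?P" by auto
    moreover have "inj_on (\<lambda>(i,j). (j,i)) ?P" by (auto simp: inj_on_def)
    ultimately show ?thesis by (simp add: sum.reindex case_prod_unfold sym)
  qed
  finally show ?thesis by simp
qed

theorem corollary3p2: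
  fixes A :: "nat \<Rightarrow> real ^ 'm" and n :: nat
  assumes "n \<ge> 2"
  shows "(\<Sum>i = 1..2*n. (dist (A i) (A (if i = 2*n then 1 else i + 1)))\<^sup>2)
           = (\<Sum>(i, j) \<in> {(i, j). 1 \<le> i \<and> i < j \<and> j \<le> 2*n \<and> 1 < j - i \<and> j - i < 2*n - 1}.
                 (-1) ^ (j - i) * (dist (A i) (A j))\<^sup>2)
         \<longleftrightarrow> (1 / real n) *\<^sub>R (\<Sum>k = 1..n. A (2*k - 1))
              = (1 / real n) *\<^sub>R (\<Sum>k = 1..n. A (2*k))"
proof -
  define N where "N = 2*n"
  define e :: "nat \<Rightarrow> real" where "e i = (-1)^i" for i
  define d where "d i j = (dist (A i) (A j))\<^sup>2" for i j
  define f where "f i j = e i * e j * d i j" for i j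
  define S where "S = (\<Sum>i = 1..N. e i *\<^sub>R A i)"
  define a where "a i = A i \<bullet> A i" for i
  define Q where "Q = {(i, j). 1 \<le> i \<and> i < j \<and> j \<le> 2*n \<and> 1 < j - i \<and> j - i < 2*n - 1}"
  define P where "P = {(i, j). 1 \<le> i \<and> i < j \<and> j \<le> N}"
  define E where "E = insert (1, N) ((\<lambda>i. (i, i+1)) ` {1..<N})"
  have d_exp: "d i j = a i - 2 * (A i \<bullet> A j) + a j" for i j
    unfolding d_def a_def dist_norm power2_norm_eq_inner
    by (simp add: inner_diff_left inner_diff_right inner_commute)
  have esum: "(\<Sum>j = 1..N. e j) = 0"
    unfolding N_def pair_sum e_def
    by (rule sum.neutral) (auto simp: power_diff)
  have SS: "S \<bullet> S = (\<Sum>i = 1..N. \<Sum>j = 1..N. e i * e j * (A i \<bullet> A j))"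
    unfolding S_def by (simp add: inner_sum_left inner_sum_right sum_distrib_left mult_ac inner_commute)
  have full: "(\<Sum>i = 1..N. \<Sum>j = 1..N. f i j) = - 2 * (S \<bullet> S)"
  proof -
    have "(\<Sum>i = 1..N. \<Sum>j = 1..N. f i j) =
      (\<Sum>i = 1..N. \<Sum>j = 1..N. e i * a i * e j) - 2 * (\<Sum>i = 1..N. \<Sum>j = 1..N. e i * e j * (A i \<bullet> A j))
      + (\<Sum>i = 1..N. \<Sum>j = 1..N. e i * (e j * a j))"
      unfolding f_def d_exp
      by (simp add: sum_subtractf sum.distrib sum_distrib_left algebra_simps)
    also have "(\<Sum>i = 1..N. \<Sum>j = 1..N. e i * a i * e j) = 0"
      using esum by (simp add: sum_distrib_left[symmetric])
    also have "(\<Sum>i = 1..N. \<Sum>j = 1..N. e i * (e j * a j)) = 0"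
      using esum by (simp add: sum_distrib_right[symmetric] sum_distrib_left[symmetric])
    finally show ?thesis using SS by simp
  qed
  have Psum: "(\<Sum>(i,j)\<in>P. f i j) = - (S \<bullet> S)"
    using sym_sum[of f N] full unfolding P_def
    by (auto simp: f_def d_def dist_commute)
  have PQE: "P = Q \<union> E" and QE: "Q \<inter> E = {}"
    using assms unfolding P_def Q_def E_def N_def by auto
  have finP: "finite P"
    by (rule finite_subset[of _ "{1..N} \<times> {1..N}"]) (auto simp: P_def)
  have split: "(\<Sum>(i,j)\<in>P. f i j) = (\<Sum>(i,j)\<in>Q. f i j) + (\<Sum>(i,j)\<in>E. f i j)"
    unfolding PQE by (rule sum.union_disjoint) (use finP PQE QE in auto)
  have Qeq: "(\<Sum>(i,j)\<in>Q. f i j) = (\<Sum>(i, j) \<in> Q. (-1) ^ (j - i) * (dist (A i) (A j))\<^sup>2)"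
  proof (rule sum.cong[OF refl], clarify)
    fix i j assume "(i, j) \<in> Q"
    then have "i < j" by (auto simp: Q_def)
    then have "i + j = (j - i) + 2 * i" by simp
    then have "e i * e j = (-1::real)^((j - i) + 2 * i)"
      unfolding e_def by (simp add: power_add[symmetric])
    then have "e i * e j = (-1::real)^(j-i)"
      by (simp add: power_add power_mult)
    then show "f i j = (-1) ^ (j - i) * (dist (A i) (A j))\<^sup>2" by (simp add: f_def d_def)
  qed
  have cyc: "(\<Sum>i = 1..2*n. (dist (A i) (A (if i = 2*n then 1 else i + 1)))\<^sup>2) = - (\<Sum>(i,j)\<in>E. f i j)"
  proof -
    have N1: "N = Suc (N - 1)" "1 \<le> N" using assms by (auto simp: N_def)
    have "(\<Sum>i = 1..N. (dist (A i) (A (if i = N then 1 else i + 1)))\<^sup>2)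
        = (\<Sum>i = 1..<N. d i (i+1)) + d 1 N"
    proof -
      have "{1..N} = insert N {1..<N}" using N1 by auto
      then have "(\<Sum>i = 1..N. (dist (A i) (A (if i = N then 1 else i + 1)))\<^sup>2)
        = (dist (A N) (A 1))\<^sup>2 + (\<Sum>i = 1..<N. (dist (A i) (A (if i = N then 1 else i + 1)))\<^sup>2)"
        by simp
      also have "(\<Sum>i = 1..<N. (dist (A i) (A (if i = N then 1 else i + 1)))\<^sup>2) = (\<Sum>i = 1..<N. d i (i+1))"
        by (rule sum.cong) (auto simp: d_def)
      finally show ?thesis by (simp add: d_def dist_commute)
    qed
    moreover have "(\<Sum>(i,j)\<in>E. f i j) = f 1 N + (\<Sum>i = 1..<N. f i (i+1))"
    proof -
      have "(1, N) \<notin> (\<lambda>i. (i, i+1)) ` {1..<N}" using assms by (auto simp: N_def)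
      moreover have "inj_on (\<lambda>i. (i, i+1)) {1..<N}" by (auto simp: inj_on_def)
      ultimately show ?thesis unfolding E_def by (simp add: sum.reindex)
    qed
    moreover have "f 1 N = - d 1 N" using assms by (simp add: f_def e_def N_def)
    moreover have "(\<Sum>i = 1..<N. f i (i+1)) = - (\<Sum>i = 1..<N. d i (i+1))"
      by (simp add: f_def e_def sum_negf[symmetric])
    ultimately show ?thesis unfolding N_def by simp
  qed
  have key: "(\<Sum>i = 1..2*n. (dist (A i) (A (if i = 2*n then 1 else i + 1)))\<^sup>2)
       = (\<Sum>(i, j) \<in> Q. (-1) ^ (j - i) * (dist (A i) (A j))\<^sup>2) + S \<bullet> S"
    using cyc split Psum Qeq by simp
  have Sdef2: "S = (\<Sum>k = 1..n. A (2*k)) - (\<Sum>k = 1..n. A (2*k - 1))"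
  proof -
    have "S = (\<Sum>k = 1..n. e (2*k-1) *\<^sub>R A (2*k-1) + e (2*k) *\<^sub>R A (2*k))"
      unfolding S_def N_def by (rule pair_sum)
    also have "\<dots> = (\<Sum>k = 1..n. A (2*k) - A (2*k-1))"
      by (rule sum.cong) (auto simp: e_def power_diff)
    finally show ?thesis by (simp add: sum_subtractf)
  qed
  have "n > 0" using assms by simp
  then have "((1 / real n) *\<^sub>R (\<Sum>k = 1..n. A (2*k - 1)) = (1 / real n) *\<^sub>R (\<Sum>k = 1..n. A (2*k)))
     \<longleftrightarrow> S = 0" unfolding Sdef2 by auto
  also have "\<dots> \<longleftrightarrow> S \<bullet> S = 0" by simp
  finally show ?thesis unfolding key Q_def by auto
qed

end
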